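(* Let $(\Gamma,\rho)$ be a voltage graph with $\Gamma=(V,E)$ rooted and voltage group $G$ a finite group, with local groups $\{G_i\}$ and directed local groups $\{G_i^*\}$, and let $\overline\Gamma$ be its derived graph. Then every (weakly) connected component of $\overline\Gamma$ is rooted if and only if $G_i^*=G_i$ for some root $v_i$ of $\Gamma$; moreover, $G_i^*=G_i$ holds for some root of $\Gamma$ if and only if it holds for every root of $\Gamma$.
   Context: $\Gamma$ is a simple digraph, $e_{ij}$ the edge $v_i\to v_j$; $\rho:E\to G$. A semi-walk is $w=v_{i_1}a_1\dots a_{n-1}v_{i_n}$ with each $a_j\in\{e_{i_ji_{j+1}},e_{i_{j+1}i_j}\}$; closed if $v_{i_1}=v_{i_n}$; a walk if every $a_j=e_{i_ji_{j+1}}$; a path is a walk with distinct vertices. Net voltage $f(w)=\bar\rho(a_1)\cdots\bar\rho(a_{n-1})$, $\bar\rho(a_j)=\rho(a_j)$ for forward edges and $\rho(a_j)^{-1}$ for backward ones ($f=\mathbf 1$ on a single vertex). Local group $G_i=\{f(w): w$ closed semi-walk at $v_i\}$, directed local group $G_i^*=\{f(w): w$ closed walk at $v_i\}$. A digraph is rooted if some vertex (a root) is reachable by a path from every vertex. The derived graph $\overline\Gamma$ has vertex set $G\times V$ (vertices written $[g,v_i]$) and an edge $[g_i,v_i]\to[g_j,v_j]$ iff $e_{ij}\in E$ and $g_j=g_i\cdot\rho(e_{ij})$. Connected components of $\overline\Gamma$ are its maximal weakly connected subgraphs (any two vertices joined by a semi-walk). *)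

theory Defs
  imports "HOL-Algebra.Group"
begin

text \<open>A semi-walk starting at x is encoded by
  its start vertex and a list of steps (z, b): the next vertex z and a flag b,
  where b = True means the forward edge (x, z) is used and b = False means the
  backward edge (z, x) is used.\<close>

inductive semiwalk :: "'v set \<Rightarrow> ('v \<times> 'v) set \<Rightarrow> 'v \<Rightarrow> ('v \<times> bool) list \<Rightarrow> 'v \<Rightarrow> bool"
  for V E where
  sw_nil: "x \<in> V \<Longrightarrow> semiwalk V E x [] x"
| sw_cons: "\<lbrakk>(b \<and> (x, z) \<in> E) \<or> (\<not> b \<and> (z, x) \<in> E); semiwalk V E z s y\<rbrakk>
            \<Longrightarrow> semiwalk V E x ((z, b) # s) y"

definition sw_vertices :: "'v \<Rightarrow> ('v \<times> bool) list \<Rightarrow> 'v list" where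
  "sw_vertices x s = x # map fst s"

definition walk :: "'v set \<Rightarrow> ('v \<times> 'v) set \<Rightarrow> 'v \<Rightarrow> ('v \<times> bool) list \<Rightarrow> 'v \<Rightarrow> bool" where
  "walk V E x s y \<longleftrightarrow> semiwalk V E x s y \<and> (\<forall>st \<in> set s. snd st)"

definition dpath :: "'v set \<Rightarrow> ('v \<times> 'v) set \<Rightarrow> 'v \<Rightarrow> ('v \<times> bool) list \<Rightarrow> 'v \<Rightarrow> bool" where
  "dpath V E x s y \<longleftrightarrow> walk V E x s y \<and> distinct (sw_vertices x s)"

definition is_root :: "'v set \<Rightarrow> ('v \<times> 'v) set \<Rightarrow> 'v \<Rightarrow> bool" where
  "is_root V E r \<longleftrightarrow> r \<in> V \<and> (\<forall>v \<in> V. \<exists>s. dpath V E v s r)"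

definition rooted :: "'v set \<Rightarrow> ('v \<times> 'v) set \<Rightarrow> bool" where
  "rooted V E \<longleftrightarrow> (\<exists>r. is_root V E r)"

fun netv :: "('g, 'm) monoid_scheme \<Rightarrow> ('v \<times> 'v \<Rightarrow> 'g) \<Rightarrow> 'v \<Rightarrow> ('v \<times> bool) list \<Rightarrow> 'g" where
  "netv G \<rho> x [] = \<one>\<^bsub>G\<^esub>"
| "netv G \<rho> x ((z, b) # s) =
     (if b then \<rho> (x, z) else inv\<^bsub>G\<^esub> (\<rho> (z, x))) \<otimes>\<^bsub>G\<^esub> netv G \<rho> z s"

definition local_group ::
  "('g, 'm) monoid_scheme \<Rightarrow> 'v set \<Rightarrow> ('v \<times> 'v) set \<Rightarrow> ('v \<times> 'v \<Rightarrow> 'g) \<Rightarrow> 'v \<Rightarrow> 'g set" where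
  "local_group G V E \<rho> v = {netv G \<rho> v s | s. semiwalk V E v s v}"

definition dir_local_group ::
  "('g, 'm) monoid_scheme \<Rightarrow> 'v set \<Rightarrow> ('v \<times> 'v) set \<Rightarrow> ('v \<times> 'v \<Rightarrow> 'g) \<Rightarrow> 'v \<Rightarrow> 'g set" where
  "dir_local_group G V E \<rho> v = {netv G \<rho> v s | s. walk V E v s v}"

text \<open>Derived graph: vertices [g, v] encoded as pairs (g, v).\<close>
definition derived_V :: "('g, 'm) monoid_scheme \<Rightarrow> 'v set \<Rightarrow> ('g \<times> 'v) set" where
  "derived_V G V = carrier G \<times> V"

definition derived_E ::
  "('g, 'm) monoid_scheme \<Rightarrow> 'v set \<Rightarrow> ('v \<times> 'v) set \<Rightarrow> ('v \<times> 'v \<Rightarrow> 'g)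
     \<Rightarrow> (('g \<times> 'v) \<times> ('g \<times> 'v)) set" where
  "derived_E G V E \<rho> = {((g, u), (h, v)). g \<in> carrier G \<and> (u, v) \<in> E \<and> h = g \<otimes>\<^bsub>G\<^esub> \<rho> (u, v)}"

text \<open>Vertex sets of the (weakly) connected components: maximal sets of vertices
  pairwise joined by semi-walks; the component is the induced subgraph.\<close>
definition components :: "'v set \<Rightarrow> ('v \<times> 'v) set \<Rightarrow> 'v set set" where
  "components V E = {{y. \<exists>s. semiwalk V E x s y} | x. x \<in> V}"

end

theory Submission
  imports Defs
begin


lemma sw_end_in: "semiwalk V E x s y \<Longrightarrow> y \<in> V"
  by (induction rule: semiwalk.induct) auto

lemma sw_append: "semiwalk V E x s m \<Longrightarrow> semiwalk V E m t y \<Longrightarrow> semiwalk V E x (s @ t) y"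
  by (induction rule: semiwalk.induct) (auto intro: semiwalk.intros)

lemma sw_suffix: "semiwalk V E x (s @ (w, b) # t) y \<Longrightarrow> semiwalk V E w t y"
proof (induction s arbitrary: x)
  case Nil
  then show ?case by (auto elim: semiwalk.cases)
next
  case (Cons a s)
  then show ?case by (cases a) (auto elim: semiwalk.cases)
qed

lemma sw_mono: "semiwalk V E x s y \<Longrightarrow> V \<subseteq> V' \<Longrightarrow> E \<subseteq> E' \<Longrightarrow> semiwalk V' E' x s y"
  by (induction rule: semiwalk.induct) (auto intro: semiwalk.intros)

lemma sw_restrict:
  assumes "semiwalk V E x s y" "x \<in> C"
    and "\<And>a b. a \<in> C \<Longrightarrow> (a, b) \<in> E \<or> (b, a) \<in> E \<Longrightarrow> b \<in> C"
  shows "semiwalk C (E \<inter> (C \<times> C)) x s y"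
  using assms
proof (induction rule: semiwalk.induct)
  case (sw_nil x)
  then show ?case by (auto intro: semiwalk.intros)
next
  case (sw_cons b x z s y)
  then have "z \<in> C" by blast
  with sw_cons show ?case by (auto intro: semiwalk.intros)
qed

lemma walk_dpath:
  assumes "semiwalk V E x s y" "\<forall>st \<in> set s. snd st"
  shows "\<exists>t. dpath V E x t y"
  using assms
proof (induction rule: semiwalk.induct)
  case (sw_nil x)
  then show ?case
    by (rule_tac x="[]" in exI) (auto simp: dpath_def walk_def sw_vertices_def intro: semiwalk.intros)
next
  case (sw_cons b x z s y)
  then obtain t where t: "dpath V E z t y" by auto
  have b: b "(x, z) \<in> E" using sw_cons by auto
  show ?case
  proof (cases "x \<in> set (sw_vertices z t)")
    case False
    have "dpath V E x ((z, True) # t) y"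
      using t False b unfolding dpath_def walk_def sw_vertices_def
      by (auto intro: semiwalk.intros)
    then show ?thesis by blast
  next
    case True
    show ?thesis
    proof (cases "x = z")
      case True
      then show ?thesis using t by blast
    next
      case False
      with True have "x \<in> fst ` set t" by (auto simp: sw_vertices_def)
      then obtain c where "(x, c) \<in> set t" by force
      then obtain t1 t2 where tt: "t = t1 @ (x, c) # t2" by (meson split_list)
      have "semiwalk V E x t2 y" using t tt sw_suffix unfolding dpath_def walk_def by metis
      moreover have "\<forall>st \<in> set t2. snd st" using t tt unfolding dpath_def walk_def by auto
      moreover have "distinct (sw_vertices x t2)"
        using t tt unfolding dpath_def sw_vertices_def by auto
      ultimately have "dpath V E x t2 y" unfolding dpath_def walk_def by auto
      then show ?thesis by blast
    qed
  qed
qed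



lemma netv_closed:
  assumes "group G" "\<forall>e \<in> E. \<rho> e \<in> carrier G"
  shows "semiwalk V E x s y \<Longrightarrow> netv G \<rho> x s \<in> carrier G"
proof (induction rule: semiwalk.induct)
  case (sw_nil x)
  then show ?case using assms by (simp add: group.is_monoid monoid.one_closed)
next
  case (sw_cons b x z s y)
  interpret group G by fact
  show ?case using sw_cons assms by auto
qed

lemma netv_append:
  assumes "group G" "\<forall>e \<in> E. \<rho> e \<in> carrier G"
  shows "semiwalk V E a s m \<Longrightarrow> semiwalk V E m t w \<Longrightarrow>
     netv G \<rho> a (s @ t) = netv G \<rho> a s \<otimes>\<^bsub>G\<^esub> netv G \<rho> m t"
proof (induction rule: semiwalk.induct)
  case (sw_nil x)
  interpret group G by fact
  show ?case using netv_closed[OF assms sw_nil(2)] by simp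
next
  case (sw_cons b x z s y)
  interpret group G by fact
  have c1: "netv G \<rho> z s \<in> carrier G" using netv_closed[OF assms sw_cons(2)] .
  have c2: "netv G \<rho> y t \<in> carrier G" using netv_closed[OF assms sw_cons(4)] .
  show ?case using sw_cons assms c1 c2 by (auto simp: m_assoc)
qed

fun rev_sw :: "'v \<Rightarrow> ('v \<times> bool) list \<Rightarrow> ('v \<times> bool) list" where
  "rev_sw x [] = []"
| "rev_sw x ((z, b) # s) = rev_sw z s @ [(x, \<not> b)]"

lemma sw_rev:
  assumes "group G" "\<forall>e \<in> E. \<rho> e \<in> carrier G" "E \<subseteq> V \<times> V"
  shows "semiwalk V E x s y \<Longrightarrow> semiwalk V E y (rev_sw x s) x \<and>
     netv G \<rho> y (rev_sw x s) = inv\<^bsub>G\<^esub> (netv G \<rho> x s)"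
proof (induction rule: semiwalk.induct)
  case (sw_nil x)
  interpret group G by fact
  show ?case using sw_nil by (auto intro: semiwalk.intros)
next
  case (sw_cons b x z s y)
  interpret group G by fact
  have xV: "x \<in> V" using sw_cons(1) assms(3) by auto
  have one: "semiwalk V E z [(x, \<not> b)] x"
    using sw_cons(1) xV by (auto intro: semiwalk.intros)
  have c1: "netv G \<rho> z s \<in> carrier G" using netv_closed[OF assms(1,2) sw_cons(2)] .
  have sw: "semiwalk V E y (rev_sw z s @ [(x, \<not> b)]) x"
    using sw_append[OF conjunct1[OF sw_cons(3)] one] .
  have "netv G \<rho> y (rev_sw z s @ [(x, \<not> b)]) = inv\<^bsub>G\<^esub> (netv G \<rho> z s) \<otimes>\<^bsub>G\<^esub> netv G \<rho> z [(x, \<not> b)]"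
    using netv_append[OF assms(1,2) conjunct1[OF sw_cons(3)] one] sw_cons(3) by simp
  also have "\<dots> = inv\<^bsub>G\<^esub> ((if b then \<rho> (x, z) else inv\<^bsub>G\<^esub> \<rho> (z, x)) \<otimes>\<^bsub>G\<^esub> netv G \<rho> z s)"
    using sw_cons(1) assms(2) c1 by (auto simp: inv_mult_group)
  finally show ?case using sw by simp
qed



fun lift :: "('g, 'm) monoid_scheme \<Rightarrow> ('v \<times> 'v \<Rightarrow> 'g) \<Rightarrow> 'g \<Rightarrow> 'v \<Rightarrow> ('v \<times> bool) list
   \<Rightarrow> (('g \<times> 'v) \<times> bool) list" where
  "lift G \<rho> g x [] = []"
| "lift G \<rho> g x ((z, b) # s) =
    (let g' = g \<otimes>\<^bsub>G\<^esub> (if b then \<rho> (x, z) else inv\<^bsub>G\<^esub> \<rho> (z, x)) in ((g', z), b) # lift G \<rho> g' z s)"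

lemma lift_snd: "map snd (lift G \<rho> g x s) = map snd s"
  by (induction G \<rho> g x s rule: lift.induct) (auto simp: Let_def)

lemma sw_lift:
  assumes "group G" "\<forall>e \<in> E. \<rho> e \<in> carrier G"
  shows "semiwalk V E x s y \<Longrightarrow> g \<in> carrier G \<Longrightarrow>
    semiwalk (derived_V G V) (derived_E G V E \<rho>) (g, x) (lift G \<rho> g x s) (g \<otimes>\<^bsub>G\<^esub> netv G \<rho> x s, y)"
proof (induction arbitrary: g rule: semiwalk.induct)
  case (sw_nil x)
  interpret group G by fact
  show ?case using sw_nil by (auto intro: semiwalk.intros simp: derived_V_def)
next
  case (sw_cons b x z s y)
  interpret group G by fact
  define g' where "g' = g \<otimes>\<^bsub>G\<^esub> (if b then \<rho> (x, z) else inv\<^bsub>G\<^esub> \<rho> (z, x))"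
  have rc: "(if b then \<rho> (x, z) else inv\<^bsub>G\<^esub> \<rho> (z, x)) \<in> carrier G" using sw_cons(1) assms(2) by auto
  have g'c: "g' \<in> carrier G" using rc sw_cons(4) g'_def by auto
  have c1: "netv G \<rho> z s \<in> carrier G" using netv_closed[OF assms sw_cons(2)] .
  have IH: "semiwalk (derived_V G V) (derived_E G V E \<rho>) (g', z) (lift G \<rho> g' z s) (g' \<otimes>\<^bsub>G\<^esub> netv G \<rho> z s, y)"
    using sw_cons(3) g'c by blast
  have edge: "(b \<and> ((g, x), (g', z)) \<in> derived_E G V E \<rho>) \<or> (\<not> b \<and> ((g', z), (g, x)) \<in> derived_E G V E \<rho>)"
    using sw_cons(1,4) g'c assms(2) unfolding derived_E_def g'_def by (auto simp: m_assoc)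
  have "g' \<otimes>\<^bsub>G\<^esub> netv G \<rho> z s = g \<otimes>\<^bsub>G\<^esub> netv G \<rho> x ((z, b) # s)"
    using rc c1 sw_cons(4) by (simp add: g'_def m_assoc)
  then show ?case using semiwalk.sw_cons[OF edge IH] by (simp add: g'_def Let_def)
qed

definition proj :: "(('g \<times> 'v) \<times> bool) list \<Rightarrow> ('v \<times> bool) list" where
  "proj s = map (\<lambda>(p, b). (snd p, b)) s"

lemma sw_proj:
  assumes "group G" "\<forall>e \<in> E. \<rho> e \<in> carrier G"
  shows "semiwalk (derived_V G V) (derived_E G V E \<rho>) a s c \<Longrightarrow>
    semiwalk V E (snd a) (proj s) (snd c) \<and> fst a \<in> carrier G \<and> fst c = fst a \<otimes>\<^bsub>G\<^esub> netv G \<rho> (snd a) (proj s)"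
proof (induction rule: semiwalk.induct)
  case (sw_nil x)
  interpret group G by fact
  show ?case using sw_nil by (auto intro: semiwalk.intros simp: derived_V_def proj_def)
next
  case (sw_cons b x z s y)
  interpret group G by fact
  obtain g u where x: "x = (g, u)" by force
  obtain h v where z: "z = (h, v)" by force
  show ?case
  proof (cases b)
    case True
    then have e: "(u, v) \<in> E" "g \<in> carrier G" "h = g \<otimes>\<^bsub>G\<^esub> \<rho> (u, v)"
      using sw_cons(1) unfolding x z derived_E_def by auto
    have c1: "netv G \<rho> v (proj s) \<in> carrier G" using netv_closed[OF assms] sw_cons(3) z by auto
    show ?thesis using sw_cons(3) e True c1 assms(2) x z
      by (auto simp: proj_def m_assoc intro: semiwalk.intros)
  next
    case False
    then have e: "(v, u) \<in> E" "h \<in> carrier G" "g = h \<otimes>\<^bsub>G\<^esub> \<rho> (v, u)"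
      using sw_cons(1) unfolding x z derived_E_def by auto
    have rc: "\<rho> (v, u) \<in> carrier G" using e assms(2) by auto
    have hh: "h = g \<otimes>\<^bsub>G\<^esub> inv\<^bsub>G\<^esub> \<rho> (v, u)" using e rc by (simp add: m_assoc)
    have c1: "netv G \<rho> v (proj s) \<in> carrier G" using netv_closed[OF assms] sw_cons(3) z by auto
    have gc: "g \<in> carrier G" using e rc by simp
    have ih: "semiwalk V E v (proj s) (snd y)" "fst y = h \<otimes>\<^bsub>G\<^esub> netv G \<rho> v (proj s)"
      using sw_cons(3) z by auto
    have sw: "semiwalk V E u ((v, False) # proj s) (snd y)"
      using e(1) ih(1) by (auto intro: semiwalk.intros)
    have eq: "fst y = g \<otimes>\<^bsub>G\<^esub> (inv\<^bsub>G\<^esub> \<rho> (v, u) \<otimes>\<^bsub>G\<^esub> netv G \<rho> v (proj s))"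
      unfolding ih(2) hh using gc rc c1 by (simp add: m_assoc)
    have pr: "proj ((z, b) # s) = (v, False) # proj s" using False z by (simp add: proj_def)
    show ?thesis unfolding pr using sw eq gc x False by simp
  qed
qed

lemma proj_snd: "map snd (proj s) = map snd s"
  by (simp add: proj_def split_def)



context group
begin

lemma walk_append_all: "\<forall>st\<in>set s. snd st \<Longrightarrow> \<forall>st\<in>set t. snd st \<Longrightarrow> \<forall>st\<in>set (s @ t). snd st"
  by auto

lemma lift_fwd: "\<forall>st\<in>set s. snd st \<Longrightarrow> \<forall>st\<in>set (lift G \<rho> g x s). snd st"
  using lift_snd[of G \<rho> g x s] by (metis list.set_map image_iff)

lemma proj_fwd: "\<forall>st\<in>set s. snd st \<Longrightarrow> \<forall>st\<in>set (proj s). snd st"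
  using proj_snd[of s] by (metis list.set_map image_iff)

lemma factA:
  assumes rc: "\<forall>e \<in> E. \<rho> e \<in> carrier G" and EV: "E \<subseteq> V \<times> V"
    and root: "is_root V E r"
    and comps: "\<forall>C \<in> components (derived_V G V) (derived_E G V E \<rho>).
             rooted C (derived_E G V E \<rho> \<inter> (C \<times> C))"
  shows "dir_local_group G V E \<rho> r = local_group G V E \<rho> r"
proof
  show "dir_local_group G V E \<rho> r \<subseteq> local_group G V E \<rho> r"
    unfolding dir_local_group_def local_group_def walk_def by auto
next
  let ?DV = "derived_V G V" and ?DE = "derived_E G V E \<rho>"
  have grp: "group G" by (rule group_axioms)
  have rV: "r \<in> V" using root unfolding is_root_def by auto
  define C where "C = {y. \<exists>s. semiwalk ?DV ?DE (\<one>, r) s y}"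
  have CDV: "C \<subseteq> ?DV"
  proof
    fix y assume "y \<in> C"
    then obtain s0 where "semiwalk ?DV ?DE (\<one>, r) s0 y" unfolding C_def by blast
    then show "y \<in> ?DV" by (rule sw_end_in)
  qed
  have oneDV: "(\<one>, r) \<in> ?DV" using rV by (simp add: derived_V_def)
  have "C \<in> components ?DV ?DE" unfolding components_def C_def using oneDV by blast
  with comps obtain R where R: "is_root C (?DE \<inter> (C \<times> C)) R" unfolding rooted_def by blast
  obtain a u where Rau: "R = (a, u)" by force
  have "R \<in> C" using R unfolding is_root_def by (elim conjE)
  then obtain s0 where "semiwalk ?DV ?DE (\<one>, r) s0 R" unfolding C_def by blast
  then have "R \<in> ?DV" by (rule sw_end_in)
  then have au: "a \<in> carrier G" "u \<in> V" using Rau by (auto simp: derived_V_def)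
  obtain P where P: "dpath V E u P r" using root au(2) unfolding is_root_def by blast
  have Psw: "semiwalk V E u P r" and Pf: "\<forall>st\<in>set P. snd st" using P unfolding dpath_def walk_def by auto
  define p where "p = netv G \<rho> u P"
  have pc: "p \<in> carrier G" unfolding p_def using netv_closed[OF grp rc Psw] .
  have key: "\<exists>w. walk V E r w r \<and> netv G \<rho> r w = inv c \<otimes> (a \<otimes> p)" if cC: "(c, r) \<in> C" for c
  proof -
    obtain t where t: "dpath C (?DE \<inter> (C \<times> C)) (c, r) t R" using R cC unfolding is_root_def by blast
    then have tw: "semiwalk C (?DE \<inter> (C \<times> C)) (c, r) t R" and tf: "\<forall>st\<in>set t. snd st"
      unfolding dpath_def walk_def by auto
    have "semiwalk ?DV ?DE (c, r) t R"
      by (rule sw_mono[OF tw CDV]) auto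
    from sw_proj[OF grp rc this] Rau
    have pr: "semiwalk V E r (proj t) u" "c \<in> carrier G" "a = c \<otimes> netv G \<rho> r (proj t)" by auto
    have nc: "netv G \<rho> r (proj t) \<in> carrier G" using netv_closed[OF grp rc pr(1)] .
    have w: "walk V E r (proj t @ P) r"
      unfolding walk_def using sw_append[OF pr(1) Psw] proj_fwd[OF tf] Pf by auto
    have "netv G \<rho> r (proj t @ P) = netv G \<rho> r (proj t) \<otimes> p"
      unfolding p_def using netv_append[OF grp rc pr(1) Psw] .
    also have "\<dots> = inv c \<otimes> (a \<otimes> p)"
      using pr nc pc by (simp add: m_assoc[symmetric])
    finally show ?thesis using w by blast
  qed
  show "local_group G V E \<rho> r \<subseteq> dir_local_group G V E \<rho> r"
  proof
    fix k assume "k \<in> local_group G V E \<rho> r"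
    then obtain s where s: "semiwalk V E r s r" "k = netv G \<rho> r s" unfolding local_group_def by auto
    have kc: "k \<in> carrier G" using s netv_closed[OF grp rc] by auto
    have "(\<one>, r) \<in> C" unfolding C_def using oneDV by (auto intro: semiwalk.intros)
    from key[OF this] obtain w0 where w0: "walk V E r w0 r" "netv G \<rho> r w0 = a \<otimes> p"
      using au pc by auto
    have w0s: "semiwalk V E r w0 r" using w0 unfolding walk_def by auto
    have rs: "semiwalk V E r (rev_sw r s) r" "netv G \<rho> r (rev_sw r s) = inv k"
      using sw_rev[OF grp rc EV s(1)] s(2) by auto
    have S: "semiwalk V E r (w0 @ rev_sw r s) r" using sw_append[OF w0s rs(1)] .
    have Sv: "netv G \<rho> r (w0 @ rev_sw r s) = (a \<otimes> p) \<otimes> inv k"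
      using netv_append[OF grp rc w0s rs(1)] w0(2) rs(2) by simp
    have "(\<one> \<otimes> netv G \<rho> r (w0 @ rev_sw r s), r) \<in> C"
      unfolding C_def using sw_lift[OF grp rc S, of \<one>] by auto
    then have "((a \<otimes> p) \<otimes> inv k, r) \<in> C" using Sv au pc kc by simp
    from key[OF this] obtain w where w: "walk V E r w r" "netv G \<rho> r w = inv ((a \<otimes> p) \<otimes> inv k) \<otimes> (a \<otimes> p)"
      by blast
    have "inv ((a \<otimes> p) \<otimes> inv k) \<otimes> (a \<otimes> p) = k"
    proof -
      have "inv a \<otimes> (a \<otimes> p) = p" using au pc by (simp add: m_assoc[symmetric])
      then show ?thesis using au pc kc by (simp add: inv_mult_group m_assoc)
    qed
    then show "k \<in> dir_local_group G V E \<rho> r" unfolding dir_local_group_def using w by auto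
  qed
qed

end



context group
begin

lemma factB:
  assumes rc: "\<forall>e \<in> E. \<rho> e \<in> carrier G" and EV: "E \<subseteq> V \<times> V"
    and root: "is_root V E r"
    and eqg: "dir_local_group G V E \<rho> r = local_group G V E \<rho> r"
    and CC: "C \<in> components (derived_V G V) (derived_E G V E \<rho>)"
  shows "rooted C (derived_E G V E \<rho> \<inter> (C \<times> C))"
proof -
  let ?DV = "derived_V G V" and ?DE = "derived_E G V E \<rho>"
  have grp: "group G" by (rule group_axioms)
  obtain g x where gxDV: "(g, x) \<in> ?DV" and C: "C = {y. \<exists>s. semiwalk ?DV ?DE (g, x) s y}"
    using CC unfolding components_def by auto
  have gx: "g \<in> carrier G" "x \<in> V" using gxDV by (auto simp: derived_V_def)
  have DEDV: "a \<in> ?DV \<and> b \<in> ?DV" if "(a, b) \<in> ?DE" for a b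
    using that EV rc unfolding derived_E_def derived_V_def by auto
  have clos: "b \<in> C" if aC: "a \<in> C" and ab: "(a, b) \<in> ?DE \<or> (b, a) \<in> ?DE" for a b
  proof -
    obtain s0 where s0: "semiwalk ?DV ?DE (g, x) s0 a" using aC C by blast
    have "b \<in> ?DV" using ab DEDV by blast
    then have "semiwalk ?DV ?DE b [] b" by (rule semiwalk.intros)
    then have "semiwalk ?DV ?DE a [(b, (a, b) \<in> ?DE)] b"
      using ab by (intro semiwalk.sw_cons) auto
    from sw_append[OF s0 this] show ?thesis using C by blast
  qed
  obtain P where P: "dpath V E x P r" using root gx(2) unfolding is_root_def by blast
  have Psw: "semiwalk V E x P r" and Pf: "\<forall>st\<in>set P. snd st" using P unfolding dpath_def walk_def by auto
  define p where "p = netv G \<rho> x P"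
  have pc: "p \<in> carrier G" unfolding p_def using netv_closed[OF grp rc Psw] .
  define R where "R = (g \<otimes> p, r)"
  have RC: "R \<in> C" unfolding C R_def p_def using sw_lift[OF grp rc Psw gx(1)] by blast
  have "\<exists>t. dpath C (?DE \<inter> (C \<times> C)) w t R" if wC: "w \<in> C" for w
  proof -
    obtain s2 where s2: "semiwalk ?DV ?DE (g, x) s2 w" using wC C by blast
    obtain h v where w: "w = (h, v)" by force
    have "w \<in> ?DV" using s2 by (rule sw_end_in)
    then have hv: "h \<in> carrier G" "v \<in> V" using w by (auto simp: derived_V_def)
    obtain Q where Q: "dpath V E v Q r" using root hv(2) unfolding is_root_def by blast
    have Qsw: "semiwalk V E v Q r" and Qf: "\<forall>st\<in>set Q. snd st" using Q unfolding dpath_def walk_def by auto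
    define q where "q = netv G \<rho> v Q"
    have qc: "q \<in> carrier G" unfolding q_def using netv_closed[OF grp rc Qsw] .
    define W1 where "W1 = lift G \<rho> h v Q"
    have W1: "semiwalk ?DV ?DE w W1 (h \<otimes> q, r)"
      unfolding W1_def q_def w using sw_lift[OF grp rc Qsw hv(1)] .
    have W1f: "\<forall>st\<in>set W1. snd st" unfolding W1_def using lift_fwd[OF Qf] .
    have "semiwalk ?DV ?DE (g, x) (s2 @ W1) (h \<otimes> q, r)" using sw_append[OF s2 W1] .
    from sw_proj[OF grp rc this]
    have S: "semiwalk V E x (proj (s2 @ W1)) r" "h \<otimes> q = g \<otimes> netv G \<rho> x (proj (s2 @ W1))" by auto
    define S where "S = proj (s2 @ W1)"
    have Ssw: "semiwalk V E x S r" and Sv: "h \<otimes> q = g \<otimes> netv G \<rho> x S" using S S_def by auto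
    have nS: "netv G \<rho> x S \<in> carrier G" using netv_closed[OF grp rc Ssw] .
    have rs: "semiwalk V E r (rev_sw x S) x" "netv G \<rho> r (rev_sw x S) = inv (netv G \<rho> x S)"
      using sw_rev[OF grp rc EV Ssw] by auto
    have cl: "semiwalk V E r (rev_sw x S @ P) r" using sw_append[OF rs(1) Psw] .
    have clv: "netv G \<rho> r (rev_sw x S @ P) = inv (netv G \<rho> x S) \<otimes> p"
      unfolding p_def using netv_append[OF grp rc rs(1) Psw] rs(2) by simp
    have "inv (netv G \<rho> x S) \<otimes> p \<in> local_group G V E \<rho> r"
      unfolding local_group_def using cl clv by (metis (mono_tags, lifting) mem_Collect_eq)
    then have "inv (netv G \<rho> x S) \<otimes> p \<in> dir_local_group G V E \<rho> r" using eqg by simp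
    then obtain K where K: "walk V E r K r" "netv G \<rho> r K = inv (netv G \<rho> x S) \<otimes> p"
      unfolding dir_local_group_def by auto
    have Ksw: "semiwalk V E r K r" and Kf: "\<forall>st\<in>set K. snd st" using K unfolding walk_def by auto
    have hqc: "h \<otimes> q \<in> carrier G" using hv qc by simp
    have L: "semiwalk ?DV ?DE (h \<otimes> q, r) (lift G \<rho> (h \<otimes> q) r K) ((h \<otimes> q) \<otimes> netv G \<rho> r K, r)"
      using sw_lift[OF grp rc Ksw hqc] .
    have "(h \<otimes> q) \<otimes> netv G \<rho> r K = g \<otimes> p"
    proof -
      have "(h \<otimes> q) \<otimes> netv G \<rho> r K = g \<otimes> (netv G \<rho> x S \<otimes> (inv (netv G \<rho> x S) \<otimes> p))"
        unfolding Sv K(2) using gx nS pc by (simp add: m_assoc)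
      also have "\<dots> = g \<otimes> p" using nS pc by (simp add: m_assoc[symmetric])
      finally show ?thesis .
    qed
    with L have L': "semiwalk ?DV ?DE (h \<otimes> q, r) (lift G \<rho> (h \<otimes> q) r K) R" unfolding R_def by simp
    have T: "semiwalk ?DV ?DE w (W1 @ lift G \<rho> (h \<otimes> q) r K) R" using sw_append[OF W1 L'] .
    have Tf: "\<forall>st\<in>set (W1 @ lift G \<rho> (h \<otimes> q) r K). snd st" using walk_append_all[OF W1f lift_fwd[OF Kf, of \<rho> "h \<otimes> q" r]] .
    have "semiwalk C (?DE \<inter> (C \<times> C)) w (W1 @ lift G \<rho> (h \<otimes> q) r K) R"
      using sw_restrict[OF T wC] clos by blast
    from walk_dpath[OF this Tf] show ?thesis .
  qed
  then have "is_root C (?DE \<inter> (C \<times> C)) R" unfolding is_root_def using RC by blast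
  then show ?thesis unfolding rooted_def by blast
qed

end

theorem theorem3:
  fixes G :: "('g, 'm) monoid_scheme"
    and V :: "'v set" and E :: "('v \<times> 'v) set" and \<rho> :: "'v \<times> 'v \<Rightarrow> 'g"
  assumes "group G" and "finite (carrier G)"
    and "finite V" and "E \<subseteq> V \<times> V" and "\<forall>v. (v, v) \<notin> E"
    and "\<forall>e \<in> E. \<rho> e \<in> carrier G"
    and "rooted V E"
  shows "((\<forall>C \<in> components (derived_V G V) (derived_E G V E \<rho>).
             rooted C (derived_E G V E \<rho> \<inter> (C \<times> C)))
          \<longleftrightarrow> (\<exists>r. is_root V E r \<and> dir_local_group G V E \<rho> r = local_group G V E \<rho> r))
       \<and> ((\<exists>r. is_root V E r \<and> dir_local_group G V E \<rho> r = local_group G V E \<rho> r)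
          \<longleftrightarrow> (\<forall>r. is_root V E r \<longrightarrow> dir_local_group G V E \<rho> r = local_group G V E \<rho> r))"
proof -
  let ?P = "\<forall>C \<in> components (derived_V G V) (derived_E G V E \<rho>).
             rooted C (derived_E G V E \<rho> \<inter> (C \<times> C))"
  let ?Q = "\<exists>r. is_root V E r \<and> dir_local_group G V E \<rho> r = local_group G V E \<rho> r"
  let ?R = "\<forall>r. is_root V E r \<longrightarrow> dir_local_group G V E \<rho> r = local_group G V E \<rho> r"
  have PR: "?P \<Longrightarrow> ?R" using group.factA[OF assms(1) assms(6) assms(4)] by blast
  have RQ: "?R \<Longrightarrow> ?Q" using assms(7) unfolding rooted_def by blast
  have QP: "?Q \<Longrightarrow> ?P" using group.factB[OF assms(1) assms(6) assms(4)] by blast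
  show ?thesis using PR RQ QP by blast
qed

end
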